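(* Let $n=2k$, $1<r<k$ with $\gcd(r,k)=1$, and $G(x)=\sum_{i=1}^{2^r-1}x^{(i2^{k-r}+1)(2^k-1)+1}$, a vectorial bent function $\mathbb{F}_{2^n}\to\mathbb{F}_{2^k}$. For $\lambda\in\mathbb{F}_{2^k}^*$ let $G_\lambda(x)=\mathrm{Tr}^k_1(\lambda G(x))$ and let $G_\lambda^*$ be its dual. Let $t=2^{r-1}-1$ and $d_t=(2^k-1)(t2^{k-r}+1)+1$ (so that $\gcd(d_t,2^n-1)=1$). For $\lambda\in\mathbb{F}_{2^k}^*$ let $\delta$ be the unique element of $\mathbb{F}_{2^n}$ with $\lambda=\delta^{d_t}$. Then $G_\lambda^*(x)=G_1^*(\delta^{-1}x)$. In particular, $D_aD_bG_\lambda^*=0$ for all $a,b\in\mathbb{F}_{2^k}^*$.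
   Context: $\mathrm{Tr}^m_1(x)=\sum_{i=0}^{m-1}x^{2^i}$. For a bent Boolean function $f$ on $\mathbb{F}_{2^n}$ (i.e. $|W_f(a)|=2^{n/2}$ for all $a$, where $W_f(a)=\sum_x(-1)^{f(x)+\mathrm{Tr}^n_1(ax)}$), the dual $f^*$ is defined by $W_f(a)=2^{n/2}(-1)^{f^*(a)}$. $D_aD_bf(x)=f(x)+f(x+a)+f(x+b)+f(x+a+b)$. *)

theory Defs
  imports Main
begin

text \<open>The field F_{2^n} is modelled by a finite field type 'a with CARD('a) = 2^n.
  Boolean functions take values in the prime field {0,1} of 'a.\<close>

definition tr :: "nat \<Rightarrow> 'a::field \<Rightarrow> 'a" where
  "tr m x = (\<Sum>i<m. x ^ (2 ^ i))"

definition subfield_pow2 :: "nat \<Rightarrow> 'a::field set" where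
  "subfield_pow2 k = {y. y ^ (2 ^ k) = y}"

definition sgn_bit :: "'a::field \<Rightarrow> int" where
  "sgn_bit b = (if b = 0 then 1 else -1)"

definition walsh :: "nat \<Rightarrow> ('a::{field,finite} \<Rightarrow> 'a) \<Rightarrow> 'a \<Rightarrow> int" where
  "walsh n f a = (\<Sum>x\<in>UNIV. sgn_bit (f x + tr n (a * x)))"

definition dual :: "nat \<Rightarrow> ('a::{field,finite} \<Rightarrow> 'a) \<Rightarrow> 'a \<Rightarrow> 'a" where
  "dual n f a = (if walsh n f a = 2 ^ (n div 2) then 0 else 1)"

definition D2 :: "('a::field \<Rightarrow> 'a) \<Rightarrow> 'a \<Rightarrow> 'a \<Rightarrow> 'a \<Rightarrow> 'a" where
  "D2 f a b x = f x + f (x + a) + f (x + b) + f (x + a + b)"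

definition Gfun :: "nat \<Rightarrow> nat \<Rightarrow> 'a::field \<Rightarrow> 'a" where
  "Gfun k r x = (\<Sum>i\<in>{1..2^r - 1}. x ^ ((i * 2^(k - r) + 1) * (2^k - 1) + 1))"

definition Glam :: "nat \<Rightarrow> nat \<Rightarrow> 'a::field \<Rightarrow> 'a \<Rightarrow> 'a" where
  "Glam k r lam x = tr k (lam * Gfun k r x)"

end

theory Submission
  imports Defs "HOL-Number_Theory.Residues" "HOL-Computational_Algebra.Polynomial"
begin

locale c2f =
  fixes k :: nat and ty :: "'a::{field,finite} itself"
  assumes cardF: "card (UNIV::'a set) = 2^(2*k)" and kpos: "0 < k"
begin

lemma two_eq_0: "(2::'a) = 0"
proof -
  have pos: "CHAR('a) > 0" by (simp add: finite_imp_CHAR_pos)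
  have pr: "prime CHAR('a)" using pos prime_CHAR_semidom by blast
  have "CHAR('a) dvd 2^(2*k)" using CHAR_dvd_CARD[where 'a='a] cardF by simp
  then have "CHAR('a) dvd 2" using pr prime_dvd_power by blast
  then have "CHAR('a) \<le> 2" by (simp add: dvd_imp_le)
  moreover have "CHAR('a) > 1" using pr prime_gt_1_nat by blast
  ultimately have "CHAR('a) = 2" by simp
  then show ?thesis using of_nat_CHAR[where 'a='a] by simp
qed

lemma add_self[simp]: "(x::'a) + x = 0"
proof -
  have "x + x = 2 * x" by simp
  then show ?thesis by (simp add: two_eq_0)
qed

lemma minus_eq[simp]: "- (x::'a) = x"
  using add_self[of x] by (simp add: add_eq_0_iff two_eq_0)

lemma diff_eq_add: "(x::'a) - y = x + y"
  by (metis diff_conv_add_uminus minus_eq)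

lemma add_eq0_iff: "(x::'a) + y = 0 \<longleftrightarrow> x = y"
proof
  assume "x + y = 0" then show "x = y" by (simp add: add_eq_0_iff)
qed simp

lemma sq_add: "((x::'a) + y)^2 = x^2 + y^2"
proof -
  have "(x+y)^2 = x^2 + y^2 + 2*x*y" by (simp add: power2_eq_square algebra_simps)
  then show ?thesis by (simp add: two_eq_0)
qed

lemma frob_add: "((x::'a) + y)^(2^i) = x^(2^i) + y^(2^i)"
proof (induction i)
  case (Suc i)
  have "((x + y)^(2^i))^2 = (x^(2^i))^2 + (y^(2^i))^2" using Suc by (simp add: sq_add)
  then show ?case by (simp add: power_mult[symmetric] mult.commute)
qed simp

lemma frob_sum: "finite I \<Longrightarrow> (sum f I :: 'a)^(2^i) = (\<Sum>j\<in>I. (f j)^(2^i))"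
  by (induction I rule: finite_induct) (simp_all add: frob_add)

lemma frob_inj: "(x::'a)^(2^i) = y^(2^i) \<Longrightarrow> x = y"
proof -
  assume "x^(2^i) = y^(2^i)"
  then have "(x+y)^(2^i) = 0" by (simp add: frob_add)
  then show "x = y" by (simp add: add_eq0_iff)
qed

lemma fermat: "(x::'a) ^ (2^(2*k)) = x"
proof (cases "x = 0")
  case False
  have "x * (\<Prod>y\<in>UNIV-{0}. x * y) = x * x ^ (card (UNIV :: 'a set) - 1) * \<Prod>(UNIV-{0})"
    by (simp add: prod.distrib mult_ac)
  also have "x * x ^ (card (UNIV :: 'a set) - 1) = x ^ Suc (card (UNIV :: 'a set) - 1)"
    by (subst power_Suc) auto
  also have "Suc (card (UNIV :: 'a set) - 1) = card (UNIV :: 'a set)"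
    using finite_UNIV_card_ge_0[where ?'a = 'a] by simp
  also have "(\<Prod>y\<in>UNIV-{0}. x * y) = (\<Prod>y\<in>UNIV-{0}. y)"
    by (rule prod.reindex_bij_witness[of _ "\<lambda>y. y / x" "\<lambda>y. x * y"]) (use False in auto)
  finally show ?thesis
    using cardF by simp
qed (simp)

lemma fermat1: "(x::'a) \<noteq> 0 \<Longrightarrow> x ^ (2^(2*k) - 1) = 1"
proof -
  assume nz: "x \<noteq> 0"
  have "x * x ^ (2^(2*k) - 1) = x ^ Suc (2^(2*k) - 1)" by (rule power_Suc[symmetric])
  also have "Suc (2^(2*k) - 1) = 2^(2*k)" by simp
  also have "x ^ 2^(2*k) = x * 1" using fermat by simp
  finally have "x * x ^ (2^(2*k) - 1) = x * 1" .
  then show ?thesis using nz by simp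
qed


abbreviation q :: nat where "q \<equiv> 2^k"
abbreviation Fk :: "'a set" where "Fk \<equiv> subfield_pow2 k"
definition U :: "'a set" where "U = {u. u^(2^k+1) = 1}"
definition nk :: "'a \<Rightarrow> 'a" where "nk x = x + x^(2^k)"

lemma q_ge2: "q \<ge> 2"
proof -
  have "2^1 \<le> (2::nat)^k" using kpos by (intro power_increasing) auto
  then show ?thesis by simp
qed

lemma inF: "x \<in> Fk \<longleftrightarrow> x^(2^k) = x"
  by (simp add: subfield_pow2_def)

lemma conj_conj: "((x::'a)^(2^k))^(2^k) = x"
proof -
  have "((x::'a)^(2^k))^(2^k) = x^(2^k*2^k)" by (simp add: power_mult)
  also have "2^k*2^k = (2::nat)^(2*k)" by (simp add: power_add[symmetric] mult_2)
  finally show ?thesis using fermat by simp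
qed

lemma F0[simp]: "0 \<in> Fk" and F1[simp]: "1 \<in> Fk"
  by (auto simp: inF)

lemma F_add: "x \<in> Fk \<Longrightarrow> y \<in> Fk \<Longrightarrow> x + y \<in> Fk"
  by (simp add: inF frob_add)

lemma F_mult: "x \<in> Fk \<Longrightarrow> y \<in> Fk \<Longrightarrow> x * y \<in> Fk"
  by (simp add: inF power_mult_distrib)

lemma F_inverse: "x \<in> Fk \<Longrightarrow> inverse x \<in> Fk"
  by (simp add: inF power_inverse)

lemma F_power: "x \<in> Fk \<Longrightarrow> x ^ m \<in> Fk"
proof -
  assume u: "x \<in> Fk"
  have "(x^m)^(2^k) = x^(m*(2^k))" by (rule power_mult[symmetric])
  also have "\<dots> = (x^(2^k))^m" by (metis power_mult mult.commute)
  finally show ?thesis using u by (simp add: inF)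
qed

lemma nk_in: "nk x \<in> Fk"
proof -
  have "(x + x^(2^k))^(2^k) = x^(2^k) + x" by (simp add: frob_add conj_conj)
  then show ?thesis unfolding inF nk_def by (simp add: add.commute)
qed

lemma nk_0_iff: "nk x = 0 \<longleftrightarrow> x \<in> Fk"
  unfolding nk_def inF add_eq0_iff by auto

lemma nk_add: "nk (x + y) = nk x + nk y"
  by (simp add: nk_def frob_add algebra_simps)

lemma nk_smul: "y \<in> Fk \<Longrightarrow> nk (y * x) = y * nk x"
  by (simp add: nk_def inF power_mult_distrib algebra_simps)

lemma nk_F: "c \<in> Fk \<Longrightarrow> nk c = 0"
  by (simp add: nk_0_iff)

lemma F_pow_e: assumes "y \<in> Fk" "y \<noteq> 0" shows "y^(X*(2^k-1)+1) = y"
proof -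
  have "y * y^(2^k-1) = y^(Suc (2^k-1))" by (rule power_Suc[symmetric])
  also have "Suc (2^k-1) = 2^k" by simp
  finally have "y * y^(2^k-1) = y * 1" using assms by (simp add: inF)
  then have "y^(2^k-1) = 1" using assms by simp
  then show ?thesis by (simp add: power_add power_mult mult.commute[of X])
qed

lemma U_nz: "u \<in> U \<Longrightarrow> u \<noteq> 0"
  by (auto simp: U_def)

lemma U_conj: "u \<in> U \<Longrightarrow> u^(2^k) = inverse u"
proof -
  assume u: "u \<in> U"
  have "u^(2^k) * u = u^(2^k+1)" by (metis power_Suc2 Suc_eq_plus1)
  then have "u^(2^k) * u = 1" using u by (simp add: U_def mult.commute)
  then show ?thesis using U_nz[OF u] by (simp add: field_simps)
qed

lemma U_mult: "u \<in> U \<Longrightarrow> w \<in> U \<Longrightarrow> u * w \<in> U"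
  unfolding U_def mem_Collect_eq power_mult_distrib by simp

lemma U_inverse: "u \<in> U \<Longrightarrow> inverse u \<in> U"
  unfolding U_def mem_Collect_eq power_inverse by simp

lemma U_power: "u \<in> U \<Longrightarrow> u ^ m \<in> U"
proof -
  assume u: "u \<in> U"
  have "(u^m)^(2^k+1) = u^(m*(2^k+1))" by (rule power_mult[symmetric])
  also have "\<dots> = (u^(2^k+1))^m" by (metis power_mult mult.commute)
  finally show ?thesis using u by (simp add: U_def)
qed

lemma U_1[simp]: "1 \<in> U"
  by (simp add: U_def)

lemma U_red: "u \<in> U \<Longrightarrow> u^((2^k+1)*X + b) = u^b"
proof -
  assume u: "u \<in> U"
  have h: "u^(2^k+1) = 1" using u unfolding U_def by blast
  have "u^((2^k+1)*X + b) = u^((2^k+1)*X) * u^b" by (rule power_add)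
  also have "u^((2^k+1)*X) = (u^(2^k+1))^X" by (rule power_mult)
  finally show ?thesis using h by simp
qed

lemma U_F: "u \<in> U \<Longrightarrow> u \<in> Fk \<Longrightarrow> u = 1"
proof -
  assume u: "u \<in> U" and f: "u \<in> Fk"
  then have "u = inverse u" using U_conj inF by metis
  then have "u * u = 1" using U_nz[OF u] by (metis right_inverse)
  have "(u+1)*(u+1) = u*u + (u+u) + 1" by (simp add: algebra_simps del: add_self)
  also have "\<dots> = 0" using \<open>u*u = 1\<close> by (simp add: two_eq_0)
  finally show "u = 1" by (simp add: add_eq0_iff)
qed

lemma sum_split_lt: "(\<Sum>i<a+b. f i) = (\<Sum>i<a. f i) + (\<Sum>i<b. f (a+i))"
  for f :: "nat \<Rightarrow> 'b::comm_monoid_add"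
  by (induction b) (simp_all add: add.assoc)

lemma tr_add: "tr m (x + y) = tr m x + tr m (y::'a)"
  by (simp add: tr_def frob_add sum.distrib)

lemma tr_0[simp]: "tr m (0::'a) = 0"
  by (simp add: tr_def power_0_left)

lemma tr_2k: "tr (2*k) (z::'a) = tr k (nk z)"
proof -
  have "tr (2*k) z = (\<Sum>i<k+k. z^(2^i))" by (simp add: tr_def mult_2)
  also have "\<dots> = (\<Sum>i<k. z^(2^i)) + (\<Sum>i<k. z^(2^(k+i)))"
    by (rule sum_split_lt)
  also have "(\<Sum>i<k. z^(2^(k+i))) = (\<Sum>i<k. (z^(2^k))^(2^i))"
    by (simp add: power_add power_mult)
  finally show ?thesis by (simp add: tr_def nk_def frob_add sum.distrib)
qed

lemma tr_F_sq: assumes "z \<in> Fk" shows "tr k z = 0 \<or> tr k z = 1"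
proof -
  have a: "(\<Sum>i<Suc k. z^(2^i)) = z + (\<Sum>i<k. z^(2^(Suc i)))"
    by (subst sum.lessThan_Suc_shift) simp
  have b: "(\<Sum>i<Suc k. z^(2^i)) = (\<Sum>i<k. z^(2^i)) + z^(2^k)"
    by simp
  have "(tr k z)^2 = (\<Sum>i<k. (z^(2^i))^2)" by (simp add: tr_def frob_sum[where i=1, simplified])
  also have "\<dots> = (\<Sum>i<k. z^(2^(Suc i)))" by (simp add: power_mult[symmetric] mult.commute)
  also have "\<dots> = tr k z" using a b assms by (simp add: inF tr_def add.commute)
  finally have "tr k z * (tr k z - 1) = 0" by (simp add: power2_eq_square algebra_simps)
  then show ?thesis by simp
qed

lemma finF[simp]: "finite (A::'a set)"
  by simp

lemma card_F_le: "card Fk \<le> q"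
proof -
  define p :: "'a poly" where "p = monom 1 q - monom 1 1"
  have pz: "p \<noteq> 0"
  proof
    assume "p = 0"
    then have "coeff p q = 0" by simp
    moreover have "coeff p q = 1" using q_ge2 by (simp add: p_def)
    ultimately show False by simp
  qed
  have deg: "degree p \<le> q" unfolding p_def
    by (intro degree_diff_le) (auto intro: order.trans[OF degree_monom_le] simp: q_ge2)
  have "Fk = {x. poly p x = 0}"
    by (auto simp: p_def poly_monom inF)
  then show ?thesis using card_poly_roots_bound[OF pz] deg by simp
qed

lemma card_U_le: "card U \<le> q + 1"
proof -
  define p :: "'a poly" where "p = monom 1 (q+1) - monom 1 0"
  have pz: "p \<noteq> 0"
  proof
    assume "p = 0"
    then have "coeff p (q+1) = 0" by simp
    moreover have "coeff p (q+1) = 1" by (simp add: p_def)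
    ultimately show False by simp
  qed
  have deg: "degree p \<le> q+1" unfolding p_def
    by (intro degree_diff_le) (auto intro: order.trans[OF degree_monom_le])
  have "U = {x. poly p x = 0}"
    by (auto simp: p_def poly_monom U_def)
  then show ?thesis using card_poly_roots_bound[OF pz] deg by simp
qed

lemma decomp_inj:
  assumes u: "u \<in> U" and y: "y \<in> Fk" "y \<noteq> 0" and u': "u' \<in> U" and y': "y' \<in> Fk" "y' \<noteq> 0"
      and eq: "u * y = u' * y'"
  shows "u = u' \<and> y = y'"
proof -
    have "u * inverse u' \<in> U" using u u' by (simp add: U_mult U_inverse)
    moreover have "u * inverse u' = y' * inverse y"
      using eq y y' U_nz[OF u'] U_nz[OF u] by (simp add: field_simps)
    moreover have "y' * inverse y \<in> Fk" using y y' by (simp add: F_mult F_inverse)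
    ultimately have "u * inverse u' = 1" using U_F by metis
    then have "u = u'" using U_nz[OF u'] by (simp add: field_simps)
    then show "u = u' \<and> y = y'" using eq U_nz[OF u] by simp
qed

lemma decomp_bij: "bij_betw (\<lambda>(u,y). u*y) (U \<times> (Fk - {0})) (UNIV - {0})"
proof -
  have inj: "inj_on (\<lambda>(u,y). u*y) (U \<times> (Fk - {0}))"
    by (auto simp: inj_on_def dest: decomp_inj)
  have img: "(\<lambda>(u,y). u*y) ` (U \<times> (Fk - {0})) = UNIV - {0}"
  proof
    show "(\<lambda>(u,y). u*y) ` (U \<times> (Fk - {0})) \<subseteq> UNIV - {0}"
      using U_nz by auto
  next
    show "UNIV - {0} \<subseteq> (\<lambda>(u,y). u*y) ` (U \<times> (Fk - {0}))"
    proof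
      fix x :: 'a assume "x \<in> UNIV - {0}"
      then have x: "x \<noteq> 0" by simp
      define N where "N = x^(2^k+1)"
      define y where "y = N^(2^(2*k-1))"
      have two: "(2::nat) * 2^(2*k-1) = 2^(2*k)" using kpos
        by (metis power_Suc Suc_pred' mult_pos_pos zero_less_numeral nat_0_less_mult_iff)
      have NF: "N \<in> Fk"
      proof -
        have "N^(2^k) = (x * x^(2^k))^(2^k)" by (simp add: N_def)
        also have "\<dots> = x^(2^k) * (x^(2^k))^(2^k)" by (rule power_mult_distrib)
        also have "\<dots> = x^(2^k) * x" by (simp only: conj_conj)
        also have "\<dots> = N" by (simp add: N_def power_add mult.commute)
        finally show ?thesis by (simp add: inF)
      qed
      have yF: "y \<in> Fk" unfolding y_def by (rule F_power[OF NF])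
      have ysq: "y^2 = N"
      proof -
        have "y^2 = N^(2^(2*k-1)*2)" by (simp add: y_def power_mult)
        also have "2^(2*k-1)*2 = (2::nat)^(2*k)" using two by simp
        finally show ?thesis by (simp add: fermat)
      qed
      have Nnz: "N \<noteq> 0" using x by (simp add: N_def)
      then have ynz: "y \<noteq> 0" using ysq by auto
      define u where "u = x / y"
      have "u^(2^k+1) = N / (y^(2^k) * y)" by (simp add: u_def N_def power_divide power_add)
      also have "y^(2^k) * y = y^2" using yF by (simp add: inF power2_eq_square)
      finally have "u \<in> U" using ysq Nnz by (simp add: U_def)
      moreover have "x = u * y" using ynz by (simp add: u_def)
      ultimately show "x \<in> (\<lambda>(u,y). u*y) ` (U \<times> (Fk - {0}))" using yF ynz by force
    qed
  qed
  show ?thesis using inj img by (simp add: bij_betw_def)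
qed

lemma cards: "card Fk = q" "card U = q + 1"
proof -
  have "card (U \<times> (Fk - {0})) = card (UNIV - {0::'a})" using bij_betw_same_card[OF decomp_bij] .
  then have eq: "card U * (card Fk - 1) = q*q - 1"
    using cardF by (simp add: card_cartesian_product card_Diff_singleton power_mult_distrib
        flip: power_add mult_2 power_mult)
  have a: "card Fk \<le> q" by (rule card_F_le)
  have b: "card U \<le> q + 1" by (rule card_U_le)
  have c: "card Fk \<ge> 1" using card_0_eq[of Fk] F0 by (metis finF less_one not_le empty_iff)
  have "q*q - 1 = (q+1)*(q-1)" using q_ge2 by (simp add: algebra_simps diff_mult_distrib2)
  then have eq2: "card U * (card Fk - 1) = (q+1)*(q-1)" using eq by simp
  have "card Fk - 1 \<le> q - 1" using a by simp
  have "card Fk = q"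
  proof (rule ccontr)
    assume "card Fk \<noteq> q"
    then have "card Fk - 1 < q - 1" using a c by linarith
    then have "card U * (card Fk - 1) < (q+1)*(q-1)" using b
      by (metis mult_le_mono1 le_less_trans mult_less_mono2 add_gr_0 zero_less_one)
    then show False using eq2 by simp
  qed
  moreover have "card U = q + 1"
  proof -
    have "card U * (q-1) = (q+1)*(q-1)" using eq2 \<open>card Fk = q\<close> by simp
    moreover have "q - 1 \<noteq> 0" using q_ge2 by simp
    ultimately show ?thesis by (metis mult_cancel2)
  qed
  ultimately show "card Fk = q" "card U = q + 1" by auto
qed

lemma tr_exists_one:
  assumes c: "c \<in> Fk" "c \<noteq> 0"
  shows "\<exists>y\<in>Fk. tr k (y*c) = 1"
proof -
  define p :: "'a poly" where "p = (\<Sum>i<k. monom (c^(2^i)) (2^i))"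
  have ev: "poly p y = tr k (y*c)" for y
    by (simp add: p_def poly_sum poly_monom tr_def power_mult_distrib mult.commute)
  have "coeff p (2^(k-1)) = (\<Sum>i<k. if i = k-1 then c^(2^i) else 0)"
    by (simp add: p_def coeff_sum)
  also have "\<dots> = c^(2^(k-1))" using kpos by (simp add: sum.delta')
  finally have "coeff p (2^(k-1)) \<noteq> 0" using c by simp
  then have pz: "p \<noteq> 0" by auto
  have deg: "degree p \<le> 2^(k-1)" unfolding p_def
  proof (intro degree_sum_le)
    fix i assume "i \<in> {..<k}"
    then have "(2::nat)^i \<le> 2^(k-1)" by (intro power_increasing) auto
    then show "degree (monom (c^(2^i)) (2^i)) \<le> 2^(k-1)"
      using degree_monom_le order.trans by blast
  qed simp
  have lt: "(2::nat)^(k-1) < 2^k" using kpos by simp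
  show ?thesis
  proof (rule ccontr)
    assume "\<not> ?thesis"
    then have "\<forall>y\<in>Fk. tr k (y*c) = 0" using tr_F_sq F_mult c by blast
    then have "Fk \<subseteq> {y. poly p y = 0}" using ev by auto
    then have "card Fk \<le> card {y. poly p y = 0}" by (intro card_mono) auto
    also have "\<dots> \<le> 2^(k-1)" using card_poly_roots_bound[OF pz] deg by simp
    finally show False using cards(1) lt kpos by simp
  qed
qed

lemma sgn_flip: "t = 0 \<or> t = (1::'a) \<Longrightarrow> sgn_bit (t + 1) = - sgn_bit t"
  by (auto simp: sgn_bit_def two_eq_0)

lemma charsum:
  assumes c: "c \<in> Fk"
  shows "(\<Sum>y\<in>Fk. sgn_bit (tr k (y*c))) = (if c = 0 then int q else 0)"
proof (cases "c = 0")
  case True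
  then show ?thesis by (simp add: sgn_bit_def cards)
next
  case False
  obtain y0 where y0: "y0 \<in> Fk" "tr k (y0*c) = 1" using tr_exists_one[OF c False] by blast
  define S where "S = (\<Sum>y\<in>Fk. sgn_bit (tr k (y*c)))"
  have "S = (\<Sum>y\<in>Fk. sgn_bit (tr k ((y + y0)*c)))"
    unfolding S_def
    by (rule sum.reindex_bij_witness[where i="\<lambda>y. y + y0" and j="\<lambda>y. y + y0"])
       (auto simp: F_add y0 add.assoc)
  also have "\<dots> = (\<Sum>y\<in>Fk. - sgn_bit (tr k (y*c)))"
  proof (rule sum.cong)
    fix y assume y: "y \<in> Fk"
    have "tr k ((y + y0)*c) = tr k (y*c) + 1" using y0 by (simp add: distrib_right tr_add)
    moreover have "tr k (y*c) = 0 \<or> tr k (y*c) = 1" using tr_F_sq F_mult y c by blast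
    ultimately show "sgn_bit (tr k ((y + y0)*c)) = - sgn_bit (tr k (y*c))" using sgn_flip by simp
  qed simp
  also have "\<dots> = - S" by (simp add: S_def sum_negf)
  finally have "S = 0" by simp
  then show ?thesis using False by (simp add: S_def)
qed

lemma walsh_formula:
  fixes G :: "'a \<Rightarrow> 'a"
  assumes G0: "G 0 = 0"
    and Gh: "\<And>u y. u \<in> U \<Longrightarrow> y \<in> Fk \<Longrightarrow> y \<noteq> 0 \<Longrightarrow> G (u*y) = y * G u"
    and GF: "\<And>u. u \<in> U \<Longrightarrow> G u \<in> Fk"
  shows "walsh (2*k) (\<lambda>x. tr k (G x)) a = int q * (int (card {u\<in>U. G u + nk (a*u) = 0}) - 1)"
proof -
  define h where "h x = sgn_bit (tr k (G x) + tr (2*k) (a*x))" for x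
  define c where "c u = G u + nk (a*u)" for u
  have cF: "u \<in> U \<Longrightarrow> c u \<in> Fk" for u using GF by (simp add: c_def F_add nk_in)
  have huy: "h (u*y) = sgn_bit (tr k (y * c u))" if u: "u \<in> U" and y: "y \<in> Fk" "y \<noteq> 0" for u y
  proof -
    have e: "a*(u*y) = y*(a*u)" by (simp add: mult_ac)
    have "tr (2*k) (y*(a*u)) = tr k (nk (y*(a*u)))" by (rule tr_2k)
    then have "tr (2*k) (y*(a*u)) = tr k (y * nk (a*u))" using y by (simp add: nk_smul)
    then have "tr (2*k) (a*(u*y)) = tr k (y * nk (a*u))" by (simp only: e)
    then show ?thesis using Gh[OF u y]
      by (simp add: h_def c_def tr_add[symmetric] distrib_left)
  qed
  have inner: "(\<Sum>y\<in>Fk-{0}. sgn_bit (tr k (y * c u))) = (if c u = 0 then int q else 0) - 1"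
    if u: "u \<in> U" for u
  proof -
    have "(\<Sum>y\<in>Fk. sgn_bit (tr k (y * c u))) = sgn_bit (tr k (0 * c u)) + (\<Sum>y\<in>Fk-{0}. sgn_bit (tr k (y * c u)))"
      by (rule sum.remove) auto
    then show ?thesis using charsum[OF cF[OF u]] by (simp add: sgn_bit_def)
  qed
  have "walsh (2*k) (\<lambda>x. tr k (G x)) a = (\<Sum>x\<in>UNIV. h x)" by (simp add: walsh_def h_def)
  also have "\<dots> = h 0 + (\<Sum>x\<in>UNIV-{0}. h x)" by (rule sum.remove) auto
  also have "h 0 = 1" by (simp add: h_def G0 sgn_bit_def)
  also have "(\<Sum>x\<in>UNIV-{0}. h x) = (\<Sum>p\<in>U \<times> (Fk-{0}). h ((\<lambda>(u,y). u*y) p))"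
    by (rule sum.reindex_bij_betw[OF decomp_bij, symmetric])
  also have "\<dots> = (\<Sum>u\<in>U. \<Sum>y\<in>Fk-{0}. h (u*y))"
    by (simp add: sum.cartesian_product split_def)
  also have "\<dots> = (\<Sum>u\<in>U. (if c u = 0 then int q else 0) - 1)"
  proof (rule sum.cong)
    fix u assume u: "u \<in> U"
    have "(\<Sum>y\<in>Fk-{0}. h (u*y)) = (\<Sum>y\<in>Fk-{0}. sgn_bit (tr k (y * c u)))"
      using huy[OF u] by (intro sum.cong) auto
    then show "(\<Sum>y\<in>Fk-{0}. h (u*y)) = (if c u = 0 then int q else 0) - 1" using inner[OF u] by simp
  qed simp
  also have "\<dots> = (\<Sum>u\<in>U. (if c u = 0 then int q else 0)) - int (card U)"
    by (simp add: sum_subtractf)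
  also have "(\<Sum>u\<in>U. (if c u = 0 then int q else 0)) = (\<Sum>u\<in>{u\<in>U. c u = 0}. int q)"
    using sum.inter_filter[of U "\<lambda>_. int q" "\<lambda>u. c u = 0"] by simp
  also have "\<dots> = int q * int (card {u\<in>U. c u = 0})" by simp
  finally show ?thesis by (simp add: cards c_def algebra_simps)
qed

lemma dual_formula:
  fixes G :: "'a \<Rightarrow> 'a"
  assumes G0: "G 0 = 0"
    and Gh: "\<And>u y. u \<in> U \<Longrightarrow> y \<in> Fk \<Longrightarrow> y \<noteq> 0 \<Longrightarrow> G (u*y) = y * G u"
    and GF: "\<And>u. u \<in> U \<Longrightarrow> G u \<in> Fk"
  shows "dual (2*k) (\<lambda>x. tr k (G x)) a = (if card {u\<in>U. G u + nk (a*u) = 0} = 2 then 0 else 1)"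
proof -
  define N where "N = card {u\<in>U. G u + nk (a*u) = 0}"
  have "walsh (2*k) (\<lambda>x. tr k (G x)) a = int q * (int N - 1)"
    unfolding N_def by (rule walsh_formula[OF G0 Gh GF])
  moreover have "int q * (int N - 1) = 2^k \<longleftrightarrow> N = 2"
  proof -
    have "int q * (int N - 1) = int q * 1 \<longleftrightarrow> int N - 1 = 1" using q_ge2 by (simp only: mult_cancel_left) simp
    then show ?thesis by simp
  qed
  ultimately show ?thesis by (simp add: dual_def N_def)
qed

end

context c2f begin

lemma of_nat_char2: "(of_nat m :: 'a) = (if even m then 0 else 1)"
proof (induction m)
  case (Suc m) then show ?case by (auto simp: two_eq_0)
qed simp

lemma geom: "(\<Sum>i\<in>{1..m}. (v::'a)^i) * (1 + v) = v + v^(Suc m)"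
proof (induction m)
  case (Suc m)
  have "(\<Sum>i\<in>{1..Suc m}. v^i) = (\<Sum>i\<in>{1..m}. v^i) + v^(Suc m)" by simp
  then have "(\<Sum>i\<in>{1..Suc m}. v^i) * (1 + v) = (v + v^(Suc m)) + v^(Suc m) * (1 + v)"
    using Suc by (simp add: distrib_right)
  also have "\<dots> = v + v^(Suc (Suc m)) + (v^(Suc m) + v^(Suc m))" by (simp add: algebra_simps del: add_self)
  finally show ?case by simp
qed simp

end

locale c2fr = c2f +
  fixes r :: nat
  assumes r1: "1 < r" and rk: "r < k"
begin

abbreviation e :: "nat \<Rightarrow> nat" where "e i \<equiv> (i * 2^(k - r) + 1) * (2^k - 1) + 1"

lemma Gfun_eq: "Gfun k r x = (\<Sum>i\<in>{1..2^r-1}. x ^ e i)"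
  by (simp add: Gfun_def)

lemma G0: "Gfun k r (0::'a) = 0"
  by (simp add: Gfun_def power_0_left)

lemma Gh: assumes y: "y \<in> Fk" "y \<noteq> 0" shows "Gfun k r (x*y) = y * Gfun k r (x::'a)"
proof -
  have "(x*y)^(e i) = y * x^(e i)" for i
    using F_pow_e[OF y, of "i * 2^(k-r)+1"] by (simp add: power_mult_distrib)
  then show ?thesis by (simp add: Gfun_eq sum_distrib_left)
qed

lemma qr: "(2::nat)^r * 2^(k-r) = 2^k"
  using rk by (simp add: power_add[symmetric])

lemma e_pair: assumes i: "1 \<le> i" "i \<le> 2^r - 1" shows "e i + e (2^r - i) = (2^k+1)*2^k + 0"
proof -
  define A where "A = i * 2^(k-r)"
  define B where "B = (2^r - i) * 2^(k-r)"
  have ir: "i \<le> 2^r" using i by simp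
  have "A + B = (i + (2^r - i)) * 2^(k-r)" by (simp add: A_def B_def add_mult_distrib)
  also have "\<dots> = 2^k" using ir qr by simp
  finally have AB: "A + B = 2^k" .
  define Q where "Q = 2^k - (1::nat)"
  have Qs: "2^k = Q + 1" by (simp add: Q_def)
  have e1: "e i = (A+1)*Q + 1" by (simp add: A_def Q_def)
  have e2: "e (2^r - i) = (B+1)*Q + 1" by (simp add: B_def Q_def)
  have "e i + e (2^r - i) = (A+B+2)*Q + 2" unfolding e1 e2 by (simp add: algebra_simps)
  also have "\<dots> = (Q+3)*Q + 2" using AB Qs by (simp add: algebra_simps)
  also have "\<dots> = (Q+1+1)*(Q+1) + 0" by (simp add: algebra_simps)
  also have "\<dots> = (2^k+1)*2^k + 0" using Qs by simp
  finally show ?thesis .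
qed

lemma GF: assumes u: "u \<in> U" shows "Gfun k r u \<in> Fk"
proof -
  have conj_e: "(u ^ e i)^(2^k) = u ^ e (2^r - i)" if i: "i \<in> {1..2^r-1}" for i
  proof -
    have w: "u ^ e i \<in> U" using u by (rule U_power)
    have "u ^ e i * u ^ e (2^r - i) = u ^ (e i + e (2^r - i))" by (simp add: power_add)
    also have "\<dots> = 1"
    proof -
      have ep: "e i + e (2^r - i) = (2^k+1)*2^k + 0" using e_pair i by auto
      show ?thesis unfolding ep U_red[OF u] by simp
    qed
    finally have "u ^ e (2^r - i) = inverse (u ^ e i)" using U_nz[OF w] by (simp add: field_simps)
    then show ?thesis using U_conj[OF w] by simp
  qed
  have "(Gfun k r u)^(2^k) = (\<Sum>i\<in>{1..2^r-1}. (u ^ e i)^(2^k))" by (simp add: Gfun_eq frob_sum)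
  also have "\<dots> = (\<Sum>i\<in>{1..2^r-1}. u ^ e (2^r - i))" by (rule sum.cong[OF refl]) (rule conj_e)
  also have "\<dots> = (\<Sum>i\<in>{1..2^r-1}. u ^ e i)"
    by (rule sum.reindex_bij_witness[where i="\<lambda>i. 2^r - i" and j="\<lambda>i. 2^r - i"]) auto
  finally show ?thesis by (simp add: inF Gfun_eq)
qed

end

context c2f begin

lemma poly_id:
  fixes s S a b v V :: "'b::comm_ring_1"
  assumes "s*v = s+1" "S*V = S+1"
  shows "s*S*((v + V) + (a*V + b)*(1+v)) = ((1+a+b)*S + s + a) + 2*(s*S + s*(a*(S+1)+b*S))"
proof -
  have "s*S*((v + V) + (a*V + b)*(1+v)) = S*(s*v) + s*(S*V) + (a*(S*V) + b*S)*(s + s*v)"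
    by (simp add: algebra_simps)
  also have "\<dots> = S*(s+1) + s*(S+1) + (a*(S+1) + b*S)*(s + (s+1))" using assms by simp
  also have "\<dots> = ((1+a+b)*S + s + a) + 2*(s*S + s*(a*(S+1)+b*S))" by (simp add: algebra_simps)
  finally show ?thesis .
qed

lemma field_id:
  fixes s S a b :: 'a
  assumes s: "s \<noteq> 0" and S: "S \<noteq> 0"
  shows "((s+1)/s + (S+1)/S = (a*((S+1)/S) + b)*(1+(s+1)/s)) \<longleftrightarrow> ((1 + a + b)*S + s + a = 0)"
proof -
  have h1: "s*((s+1)/s) = s+1" using s by simp
  have h2: "S*((S+1)/S) = S+1" using S by simp
  have "s*S*(((s+1)/s + (S+1)/S) + (a*((S+1)/S) + b)*(1+(s+1)/s)) = (1 + a + b)*S + s + a"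
    using poly_id[OF h1 h2, of a b] by (simp add: two_eq_0)
  then show ?thesis using s S
    by (metis add_eq0_iff mult_eq_0_iff)
qed

end

context c2fr begin

definition vv :: "'a \<Rightarrow> 'a" where "vv u = inverse u ^ (2^(k-r+1))"
definition phi :: "'a \<Rightarrow> 'a" where "phi s = ((s+1)/s)^(2^(r-1))"
definition A :: "'a set" where "A = {s. nk s = 1}"

lemma exp_k: "(2::nat)^(k-r+1) * 2^(r-1) = 2^k"
proof -
  have "k - r + 1 + (r - 1) = k" using r1 rk by simp
  then show ?thesis by (metis power_add)
qed

lemma exp_r: "(2::nat)^(r-1) * 2 = 2^r"
  using r1 by (metis Suc_diff_1 less_trans zero_less_one power_Suc2)

lemma uG: assumes u: "u \<in> U" shows "u * Gfun k r u = (\<Sum>i\<in>{1..2^r-1}. (vv u)^i)"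
proof -
  have tm: "u * u^(e i) = (vv u)^i" for i
  proof -
    define I where "I = i * 2^(k-r)"
    define Q where "Q = 2^k - (1::nat)"
    have Qs: "2^k + 1 = Q + 2" by (simp add: Q_def)
    have i2: "i * 2^(k-r+1) = 2 * I" by (simp add: I_def)
    have "Suc (e i) + i * 2^(k-r+1) = (I+1)*Q + 2 + 2*I" unfolding i2 by (simp add: I_def Q_def)
    also have "\<dots> = (Q+2)*(I+1) + 0" by (simp add: algebra_simps)
    also have "\<dots> = (2^k+1)*(I+1) + 0" using Qs by simp
    finally have ex: "Suc (e i) + i * 2^(k-r+1) = (2^k+1)*(I+1) + 0" .
    have "u^(Suc (e i)) * u^(i * 2^(k-r+1)) = 1"
      unfolding power_add[symmetric] ex U_red[OF u] by simp
    then have "u^(Suc (e i)) = inverse (u^(i * 2^(k-r+1)))"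
      using U_nz[OF u] by (simp add: field_simps)
    also have "\<dots> = (vv u)^i"
      by (simp add: vv_def power_inverse power_mult[symmetric] mult.commute)
    finally show ?thesis by simp
  qed
  show ?thesis unfolding Gfun_eq sum_distrib_left by (rule sum.cong[OF refl]) (rule tm)
qed

lemma vv_U: "u \<in> U \<Longrightarrow> vv u \<in> U"
  by (simp add: vv_def U_power U_inverse)

lemma vv_pow: assumes u: "u \<in> U" shows "(vv u)^(2^(r-1)) = u"
proof -
  have "(vv u)^(2^(r-1)) = inverse u ^ (2^(k-r+1) * 2^(r-1))"
    by (simp add: vv_def power_mult)
  also have "\<dots> = inverse (u^(2^k))" by (simp only: exp_k power_inverse)
  also have "\<dots> = u" using U_conj[OF u] by simp
  finally show ?thesis .
qed

lemma A_nz: "s \<in> A \<Longrightarrow> s \<noteq> 0"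
  by (auto simp: A_def nk_def power_0_left)

lemma A_conj: assumes "s \<in> A" shows "s^(2^k) = s + 1"
proof -
  have h: "s + s^(2^k) = 1" using assms by (simp add: A_def nk_def)
  have "s^(2^k) = s + (s + s^(2^k))" by (simp add: add.assoc[symmetric])
  then show ?thesis using h by (simp add: add.commute)
qed

lemma v0_U: assumes s: "s \<in> A" shows "(s+1)/s \<in> U"
proof -
  have sn: "s \<noteq> 0" using A_nz[OF s] .
  have s1: "s + 1 \<noteq> 0"
  proof
    assume "s + 1 = 0"
    then have "s^(2^k) = 0" using A_conj[OF s] by simp
    then show False using sn by simp
  qed
  have c1: "s^(2^k) + 1 = s" using A_conj[OF s] by (simp add: add.assoc two_eq_0)
  have "((s+1)/s)^(2^k) = (s+1)^(2^k)/s^(2^k)" by (rule power_divide)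
  also have "(s+1)^(2^k) = s^(2^k) + 1" using frob_add[of s 1 k] by simp
  also have "\<dots> = s" by (rule c1)
  also have "s^(2^k) = s + 1" by (rule A_conj[OF s])
  finally have "((s+1)/s)^(2^k) = s / (s+1)" .
  then have "((s+1)/s)^(2^k) * ((s+1)/s) = 1" using sn s1 by simp
  then have "((s+1)/s)^(2^k+1) = 1" by (metis power_Suc2 Suc_eq_plus1)
  then show ?thesis by (simp only: U_def mem_Collect_eq)
qed

lemma phi_U: "s \<in> A \<Longrightarrow> phi s \<in> U"
  by (simp add: phi_def U_power v0_U)

lemma vv_phi: assumes s: "s \<in> A" shows "vv (phi s) = (s+1)/s"
proof -
  have v: "(s+1)/s \<in> U" using v0_U[OF s] .
  have "vv (phi s) = inverse ((s+1)/s) ^ (2^(r-1) * 2^(k-r+1))"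
    by (simp only: vv_def phi_def power_inverse power_mult)
  also have "2^(r-1) * 2^(k-r+1) = (2::nat)^k" using exp_k by (simp add: mult.commute)
  also have "inverse ((s+1)/s) ^ (2^k) = inverse (((s+1)/s)^(2^k))" by (rule power_inverse)
  also have "\<dots> = (s+1)/s" using U_conj[OF v] by simp
  finally show ?thesis .
qed

end

context c2fr begin

lemma v0_ne1: assumes s: "s \<in> A" shows "(s+1)/s \<noteq> 1"
proof
  assume "(s+1)/s = 1"
  then have "s + 1 = s" using A_nz[OF s] by (simp add: field_simps)
  then show False by simp
qed

lemma key:
  assumes s: "s \<in> A"
  shows "(Gfun k r (phi s) + nk (a * phi s) = 0) \<longleftrightarrow> ((1 + nk a) * s^(2^r) + s + a = 0)"
proof -
  define u where "u = phi s"
  define v where "v = (s+1)/s"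
  define S where "S = s^(2^r)"
  define V where "V = v^(2^r)"
  have uU: "u \<in> U" using phi_U[OF s] by (simp add: u_def)
  have un: "u \<noteq> 0" using U_nz[OF uU] .
  have sn: "s \<noteq> 0" using A_nz[OF s] .
  have Sn: "S \<noteq> 0" using sn by (simp add: S_def)
  have vvu: "vv u = v" using vv_phi[OF s] by (simp add: u_def v_def)
  have VS: "V = (S+1)/S" by (simp add: V_def v_def S_def power_divide frob_add)
  have u2: "u^2 = V"
  proof -
    have "u^2 = (v^(2^(r-1)))^2" by (simp add: u_def phi_def v_def)
    also have "\<dots> = v^(2^(r-1)*2)" by (rule power_mult[symmetric])
    also have "\<dots> = V" unfolding exp_r V_def ..
    finally show ?thesis .
  qed
  have v1: "1 + v \<noteq> 0" using v0_ne1[OF s] by (simp add: v_def add_eq0_iff)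
  have unk: "u * nk (a*u) = a * V + a^(2^k)"
  proof -
    have "u * nk (a*u) = a*(u*u) + a^(2^k) * (u * u^(2^k))"
      by (simp add: nk_def power_mult_distrib algebra_simps)
    also have "u * u^(2^k) = 1" using U_conj[OF uU] un by simp
    finally show ?thesis using u2 by (simp add: power2_eq_square)
  qed
  have uGv: "u * Gfun k r u = (\<Sum>i\<in>{1..2^r-1}. v^i)" using uG[OF uU] vvu by simp
  have geo: "(\<Sum>i\<in>{1..2^r-1}. v^i) * (1 + v) = v + V"
  proof -
    have "Suc (2^r - 1) = (2::nat)^r" by simp
    then show ?thesis using geom[of v "2^r-1"] by (simp add: V_def)
  qed
  have "(Gfun k r u + nk (a * u) = 0) \<longleftrightarrow> (u * Gfun k r u = u * nk (a*u))"
    using un by (simp add: add_eq0_iff)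
  also have "\<dots> \<longleftrightarrow> ((\<Sum>i\<in>{1..2^r-1}. v^i) = a * V + a^(2^k))" using uGv unk by simp
  also have "\<dots> \<longleftrightarrow> ((\<Sum>i\<in>{1..2^r-1}. v^i) * (1 + v) = (a * V + a^(2^k)) * (1 + v))"
    using v1 by simp
  also have "\<dots> \<longleftrightarrow> (v + V = (a * V + a^(2^k)) * (1 + v))" using geo by simp
  also have "\<dots> \<longleftrightarrow> ((1 + a + a^(2^k))*S + s + a = 0)"
    unfolding v_def VS by (rule field_id[OF sn Sn])
  also have "1 + a + a^(2^k) = 1 + nk a" by (simp add: nk_def add.assoc)
  finally show ?thesis by (simp add: u_def S_def)
qed

lemma phi_inj: "inj_on phi A"
proof (rule inj_onI)
  fix s s' assume s: "s \<in> A" and s': "s' \<in> A" and eq: "phi s = phi s'"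
  have "(s+1)/s = (s'+1)/s'" using eq unfolding phi_def by (rule frob_inj)
  then have "1 + inverse s = 1 + inverse s'" using A_nz[OF s] A_nz[OF s'] by (simp add: field_simps)
  then show "s = s'" by simp
qed

lemma phi_ne1: "s \<in> A \<Longrightarrow> phi s \<noteq> 1"
proof
  assume s: "s \<in> A" and "phi s = 1"
  then have "((s+1)/s)^(2^(r-1)) = 1^(2^(r-1))" by (simp add: phi_def)
  then have "(s+1)/s = 1" by (rule frob_inj)
  then show False using v0_ne1[OF s] by simp
qed

lemma phi_surj: assumes u: "u \<in> U" "u \<noteq> 1" shows "\<exists>s\<in>A. phi s = u"
proof -
  define v where "v = vv u"
  have vU: "v \<in> U" using vv_U[OF u(1)] by (simp add: v_def)
  have vn: "v \<noteq> 0" using U_nz[OF vU] .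
  have v1: "v \<noteq> 1"
  proof
    assume "v = 1"
    then have "u = 1" using vv_pow[OF u(1)] by (simp add: v_def)
    then show False using u by simp
  qed
  have v1': "1 + v \<noteq> 0" using v1 by (simp add: add_eq0_iff)
  have v1'': "v + 1 \<noteq> 0" using v1' by (simp add: add.commute)
  define s where "s = inverse (1 + v)"
  have sn: "s \<noteq> 0" using v1' by (simp add: s_def)
  have sq: "s^(2^k) = v / (v + 1)"
  proof -
    have "s^(2^k) = inverse (1 + v^(2^k))" by (simp add: s_def power_inverse frob_add)
    also have "\<dots> = inverse (1 + inverse v)" using U_conj[OF vU] by simp
    also have "\<dots> = v / (v + 1)" using vn v1'' by (simp add: field_simps)
    finally show ?thesis .
  qed
  have "nk s = inverse (1+v) + v/(v+1)" unfolding nk_def sq by (simp add: s_def)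
  also have "\<dots> = (1 + v)/(v+1)" using v1'' by (simp add: field_simps add.commute)
  also have "\<dots> = 1" using v1'' by (simp add: add.commute)
  finally have sA: "s \<in> A" by (simp add: A_def)
  have "(s+1)/s = 1 + (1 + v)" using sn v1' by (simp add: s_def field_simps)
  also have "\<dots> = v" by (simp add: add.assoc[symmetric] two_eq_0)
  finally have "phi s = v^(2^(r-1))" by (simp add: phi_def)
  also have "\<dots> = u" using vv_pow[OF u(1)] by (simp add: v_def)
  finally show ?thesis using sA by blast
qed

lemma card_transfer: "card {u \<in> U - {1}. P u} = card {s \<in> A. P (phi s)}"
proof -
  have "phi ` {s \<in> A. P (phi s)} = {u \<in> U - {1}. P u}"
  proof
    show "phi ` {s \<in> A. P (phi s)} \<subseteq> {u \<in> U - {1}. P u}" using phi_U phi_ne1 by auto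
    show "{u \<in> U - {1}. P u} \<subseteq> phi ` {s \<in> A. P (phi s)}"
    proof
      fix u assume "u \<in> {u \<in> U - {1}. P u}"
      then have u: "u \<in> U" "u \<noteq> 1" "P u" by auto
      then obtain s where "s \<in> A" "phi s = u" using phi_surj by blast
      then show "u \<in> phi ` {s \<in> A. P (phi s)}" using u by force
    qed
  qed
  moreover have "inj_on phi {s \<in> A. P (phi s)}" using phi_inj by (rule inj_on_subset) auto
  ultimately show ?thesis by (metis card_image)
qed

lemma G1: "Gfun k r (1::'a) = 1"
proof -
  have "Gfun k r (1::'a) = of_nat (card {1..(2::nat)^r-1})" by (simp add: Gfun_eq)
  also have "card {1..(2::nat)^r-1} = 2^r - 1" by simp
  also have "odd ((2::nat)^r - 1)" using r1 by simp
  then have "(of_nat (2^r - 1) :: 'a) = 1" by (simp add: of_nat_char2)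
  finally show ?thesis .
qed

lemma Nform:
  "card {u\<in>U. Gfun k r u + nk (a*u) = 0}
   = (if nk a = 1 then 1 else 0) + card {s\<in>A. (1 + nk a) * s^(2^r) + s + a = 0}"
proof -
  define X where "X = {u\<in>U-{1}. Gfun k r u + nk (a*u) = 0}"
  have c1: "(Gfun k r 1 + nk (a*1) = 0) \<longleftrightarrow> nk a = 1" by (auto simp: G1 add_eq0_iff)
  have "{u\<in>U. Gfun k r u + nk (a*u) = 0} = (if nk a = 1 then insert 1 X else X)"
    using c1 by (auto simp: X_def)
  then have "card {u\<in>U. Gfun k r u + nk (a*u) = 0} = (if nk a = 1 then 1 else 0) + card X"
    by (simp add: X_def)
  also have "card X = card {s\<in>A. Gfun k r (phi s) + nk (a * phi s) = 0}"
    unfolding X_def by (rule card_transfer)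
  also have "{s\<in>A. Gfun k r (phi s) + nk (a * phi s) = 0} = {s\<in>A. (1 + nk a) * s^(2^r) + s + a = 0}"
    using key by auto
  finally show ?thesis .
qed

end

context c2fr begin

lemma Glam1: "Glam k r (1::'a) = (\<lambda>x. tr k (Gfun k r x))"
  by (simp add: Glam_def fun_eq_iff)

lemma dual_G: "dual (2*k) (Glam k r 1) z =
   (if (if nk z = 1 then 1 else 0) + card {s\<in>A. (1 + nk z) * s^(2^r) + s + z = 0} = (2::nat) then 0 else 1)"
proof -
  have "dual (2*k) (Glam k r 1) z = (if card {u\<in>U. Gfun k r u + nk (z*u) = 0} = 2 then 0 else 1)"
    unfolding Glam1 by (rule dual_formula) (auto simp: G0 Gh GF)
  then show ?thesis by (simp add: Nform)
qed

lemma dual_T1: assumes "nk z = 1" shows "dual (2*k) (Glam k r 1) z = 0"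
proof -
  have "{s\<in>A. (1 + nk z) * s^(2^r) + s + z = 0} = {z}"
    using assms by (auto simp: A_def two_eq_0 add_eq0_iff)
  then show ?thesis using assms dual_G[of z] by simp
qed

definition LL :: "'a \<Rightarrow> 'a \<Rightarrow> 'a" where "LL m s = m * s^(2^r) + s"

lemma LL_add: "LL m (s + t) = LL m s + LL m t"
  by (simp add: LL_def frob_add algebra_simps)

lemma LL_F: "m \<in> Fk \<Longrightarrow> t \<in> Fk \<Longrightarrow> LL m t \<in> Fk"
  by (simp add: LL_def F_add F_mult F_power)

lemma nk_A_diff: "s \<in> A \<Longrightarrow> s1 \<in> A \<Longrightarrow> s + s1 \<in> Fk"
  by (simp add: A_def nk_0_iff[symmetric] nk_add two_eq_0)

lemma fiberA:
  assumes s1: "s1 \<in> A" "LL m s1 = z"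
  shows "card {s\<in>A. LL m s = z} = card {t\<in>Fk. LL m t = 0}"
proof -
  have "{s\<in>A. LL m s = z} = (\<lambda>t. s1 + t) ` {t\<in>Fk. LL m t = 0}"
  proof
    show "{s\<in>A. LL m s = z} \<subseteq> (\<lambda>t. s1 + t) ` {t\<in>Fk. LL m t = 0}"
    proof
      fix s assume "s \<in> {s\<in>A. LL m s = z}"
      then have s: "s \<in> A" "LL m s = z" by auto
      have "s + s1 \<in> Fk" using nk_A_diff[OF s(1) s1(1)] .
      moreover have "LL m (s + s1) = 0" using s s1 by (simp only: LL_add) simp
      moreover have "s = s1 + (s + s1)" by (simp add: add.left_commute[of s1 s s1])
      ultimately show "s \<in> (\<lambda>t. s1 + t) ` {t\<in>Fk. LL m t = 0}" by blast
    qed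
    show "(\<lambda>t. s1 + t) ` {t\<in>Fk. LL m t = 0} \<subseteq> {s\<in>A. LL m s = z}"
    proof
      fix s assume "s \<in> (\<lambda>t. s1 + t) ` {t\<in>Fk. LL m t = 0}"
      then obtain t where t: "t \<in> Fk" "LL m t = 0" "s = s1 + t" by auto
      have "nk s = 1" using t s1 by (simp add: nk_add nk_F A_def)
      moreover have "LL m s = z" using t s1 by (simp add: LL_add)
      ultimately show "s \<in> {s\<in>A. LL m s = z}" by (simp add: A_def)
    qed
  qed
  moreover have "inj (\<lambda>t. s1 + t)" by (simp add: inj_on_def)
  ultimately show ?thesis by (simp add: card_image inj_on_subset[of _ UNIV])
qed

lemma fiberF:
  assumes t0: "t0 \<in> Fk" and m: "m \<in> Fk"
  shows "card {t\<in>Fk. LL m t = LL m t0} = card {t\<in>Fk. LL m t = 0}"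
proof -
  have "{t\<in>Fk. LL m t = LL m t0} = (\<lambda>t. t0 + t) ` {t\<in>Fk. LL m t = 0}"
  proof
    show "{t\<in>Fk. LL m t = LL m t0} \<subseteq> (\<lambda>t. t0 + t) ` {t\<in>Fk. LL m t = 0}"
    proof
      fix s assume "s \<in> {t\<in>Fk. LL m t = LL m t0}"
      then have s: "s \<in> Fk" "LL m s = LL m t0" by auto
      have "s + t0 \<in> Fk" using s t0 by (simp add: F_add)
      moreover have "LL m (s + t0) = 0" using s by (simp add: LL_add)
      moreover have "s = t0 + (s + t0)" by (simp add: add.commute add.left_commute)
      ultimately show "s \<in> (\<lambda>t. t0 + t) ` {t\<in>Fk. LL m t = 0}" by blast
    qed
    show "(\<lambda>t. t0 + t) ` {t\<in>Fk. LL m t = 0} \<subseteq> {t\<in>Fk. LL m t = LL m t0}"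
      using t0 by (auto simp: LL_add F_add)
  qed
  moreover have "inj (\<lambda>t. t0 + t)" by (simp add: inj_on_def)
  ultimately show ?thesis by (simp add: card_image inj_on_subset[of _ UNIV])
qed

lemma index2:
  assumes m: "m \<in> Fk" and K2: "card {t\<in>Fk. LL m t = 0} = 2"
  shows "\<And>y y'. y \<in> Fk \<Longrightarrow> y' \<in> Fk \<Longrightarrow> (y + y' \<in> LL m ` Fk) \<longleftrightarrow> ((y \<in> LL m ` Fk) \<longleftrightarrow> (y' \<in> LL m ` Fk))"
proof -
  define M where "M = LL m ` Fk"
  have MF: "M \<subseteq> Fk" using LL_F[OF m] by (auto simp: M_def)
  have Madd: "y \<in> M \<Longrightarrow> y' \<in> M \<Longrightarrow> y + y' \<in> M" for y y'
  proof -
    assume "y \<in> M" "y' \<in> M"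
    then obtain t t' where "t \<in> Fk" "t' \<in> Fk" "y = LL m t" "y' = LL m t'" by (auto simp: M_def)
    then show "y + y' \<in> M" by (auto simp: M_def LL_add[symmetric] F_add)
  qed
  have cardM: "card Fk = 2 * card M"
  proof -
    have e: "Fk = (\<Union>y\<in>M. {t\<in>Fk. LL m t = y})" by (auto simp: M_def)
    have "card (\<Union>y\<in>M. {t\<in>Fk. LL m t = y}) = (\<Sum>y\<in>M. card {t\<in>Fk. LL m t = y})"
      by (rule card_UN_disjoint) auto
    then have "card Fk = (\<Sum>y\<in>M. card {t\<in>Fk. LL m t = y})" using e by simp
    also have "\<dots> = (\<Sum>y\<in>M. 2)"
    proof (rule sum.cong)
      fix y assume "y \<in> M"
      then obtain t0 where "t0 \<in> Fk" "y = LL m t0" by (auto simp: M_def)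
      then show "card {t\<in>Fk. LL m t = y} = 2" using fiberF[OF _ m] K2 by simp
    qed simp
    finally show ?thesis by simp
  qed
  have half: "y \<in> Fk \<Longrightarrow> y \<notin> M \<Longrightarrow> y' \<in> Fk \<Longrightarrow> y' \<notin> M \<Longrightarrow> y + y' \<in> M" for y y'
  proof -
    assume y: "y \<in> Fk" "y \<notin> M" and y': "y' \<in> Fk" "y' \<notin> M"
    define M' where "M' = (\<lambda>z. y + z) ` M"
    have disj: "M \<inter> M' = {}"
    proof (rule ccontr)
      assume "M \<inter> M' \<noteq> {}"
      then obtain z where "z \<in> M" "z \<in> M'" by auto
      then obtain z' where "z' \<in> M" "z = y + z'" by (auto simp: M'_def)
      then have "y = z + z'" by (simp add: add.assoc)
      then show False using Madd \<open>z \<in> M\<close> \<open>z' \<in> M\<close> y by auto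
    qed
    have cM': "card M' = card M" unfolding M'_def by (rule card_image) (simp add: inj_on_def)
    have sub: "M \<union> M' \<subseteq> Fk" using MF y by (auto simp: M'_def F_add)
    have "card (M \<union> M') = card Fk" using disj cM' cardM by (simp add: card_Un_disjoint)
    then have "M \<union> M' = Fk" using sub by (intro card_subset_eq) auto
    then have "y' \<in> M'" using y' by auto
    then obtain z where "z \<in> M" "y' = y + z" by (auto simp: M'_def)
    then show "y + y' \<in> M" by (simp add: add.assoc[symmetric])
  qed
  fix y y' assume y: "y \<in> Fk" and y': "y' \<in> Fk"
  have "(y + y' \<in> M) \<longleftrightarrow> ((y \<in> M) \<longleftrightarrow> (y' \<in> M))"
  proof (cases "y \<in> M")
    case True
    have "y + y' \<in> M \<longleftrightarrow> y' \<in> M"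
    proof
      assume "y + y' \<in> M" then have "y + (y + y') \<in> M" using Madd True by blast
      then show "y' \<in> M" by (simp add: add.assoc[symmetric])
    next
      assume "y' \<in> M" then show "y + y' \<in> M" using Madd True by blast
    qed
    then show ?thesis using True by simp
  next
    case False
    have "y + y' \<in> M \<longleftrightarrow> y' \<notin> M"
    proof
      assume a: "y + y' \<in> M" show "y' \<notin> M"
      proof
        assume "y' \<in> M" then have "(y + y') + y' \<in> M" using Madd a by blast
        then show False using False by (simp add: add.assoc)
      qed
    next
      assume "y' \<notin> M" then show "y + y' \<in> M" using half y y' False by blast
    qed
    then show ?thesis using False by simp
  qed
  then show "(y + y' \<in> LL m ` Fk) \<longleftrightarrow> ((y \<in> LL m ` Fk) \<longleftrightarrow> (y' \<in> LL m ` Fk))"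
    by (simp add: M_def)
qed

end

lemma pow_coprime_one:
  fixes u :: "'a::field"
  assumes "u^a = 1" "u^b = 1" "a \<noteq> 0" "coprime a b"
  shows "u = 1"
proof -
  obtain x y where xy: "a * x = b * y + gcd a b" using bezout_nat[OF assms(3)] by blast
  have "gcd a b = 1" using assms(4) by simp
  then have "u^(a*x) = u^(b*y + 1)" using xy by simp
  then show ?thesis using assms(1,2) by (simp add: power_mult power_add)
qed

context c2fr begin

lemma nk_shift: "c \<in> Fk \<Longrightarrow> nk (x + c) = nk x"
  by (simp add: nk_add nk_F)

lemma D2_G1:
  assumes a: "a \<in> Fk" and b: "b \<in> Fk"
  shows "D2 (dual (2*k) (Glam k r 1)) a b x = 0"
proof -
  define g where "g = dual (2*k) (Glam k r (1::'a))"
  have ab: "a + b \<in> Fk" using a b by (rule F_add)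
  have D: "D2 g a b x = g (x + 0) + g (x + a) + g (x + b) + g (x + (a + b))"
    by (simp add: D2_def add.assoc)
  show ?thesis
  proof (cases "nk x = 1")
    case True
    have h: "c \<in> Fk \<Longrightarrow> g (x + c) = 0" for c using True nk_shift dual_T1 by (simp add: g_def)
    have "g x = 0" using h[of 0] by simp
    then show ?thesis using D h a b ab by (simp add: g_def)
  next
    case False
    define \<mu> where "\<mu> = 1 + nk x"
    have \<mu>F: "\<mu> \<in> Fk" by (simp add: \<mu>_def F_add nk_in)
    define M where "M = LL \<mu> ` Fk"
    define P where "P c = (\<exists>s\<in>A. LL \<mu> s = x + c)" for c
    have gc: "g (x + c) = (if card {s\<in>A. LL \<mu> s = x + c} = 2 then 0 else 1)" if c: "c \<in> Fk" for c
    proof -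
      have "{s\<in>A. (1 + nk (x+c)) * s^(2^r) + s + (x + c) = 0} = {s\<in>A. LL \<mu> s = x + c}"
        using nk_shift[OF c] by (auto simp: LL_def \<mu>_def add_eq0_iff)
      then show ?thesis using dual_G[of "x + c"] nk_shift[OF c] False by (simp add: g_def)
    qed
    show ?thesis
    proof (cases "card {t\<in>Fk. LL \<mu> t = 0} = 2")
      case False2: False
      have "g (x + c) = 1" if c: "c \<in> Fk" for c
      proof (cases "P c")
        case True
        then obtain s1 where "s1 \<in> A" "LL \<mu> s1 = x + c" by (auto simp: P_def)
        then have "card {s\<in>A. LL \<mu> s = x + c} = card {t\<in>Fk. LL \<mu> t = 0}" by (rule fiberA)
        then show ?thesis using gc[OF c] False2 by simp
      next
        case False
        then have "{s\<in>A. LL \<mu> s = x + c} = {}" by (auto simp: P_def)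
        then have c0: "card {s\<in>A. LL \<mu> s = x + c} = 0" by (simp only: card.empty)
        show ?thesis unfolding gc[OF c] c0 by simp
      qed
      then have h1: "c \<in> Fk \<Longrightarrow> g (x + c) = 1" for c .
      have "g x = 1" using h1[of 0] by simp
      then have "D2 g a b x = 0" using D h1 a b ab by (simp add: two_eq_0)
      then show ?thesis by (simp add: g_def)
    next
      case True2: True
      have gP: "g (x + c) = (if P c then 0 else 1)" if c: "c \<in> Fk" for c
      proof (cases "P c")
        case True
        then obtain s1 where "s1 \<in> A" "LL \<mu> s1 = x + c" by (auto simp: P_def)
        then have "card {s\<in>A. LL \<mu> s = x + c} = card {t\<in>Fk. LL \<mu> t = 0}" by (rule fiberA)
        then show ?thesis using gc[OF c] True2 True by simp
      next
        case False
        then have "{s\<in>A. LL \<mu> s = x + c} = {}" by (auto simp: P_def)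
        then have c0: "card {s\<in>A. LL \<mu> s = x + c} = 0" by (simp only: card.empty)
        show ?thesis unfolding gc[OF c] c0 using False by simp
      qed
      show ?thesis
      proof (cases "\<exists>c0\<in>Fk. P c0")
        case False
        then have h1: "c \<in> Fk \<Longrightarrow> g (x + c) = 1" for c using gP by auto
        have "g x = 1" using h1[of 0] by simp
        then have "D2 g a b x = 0" using D h1 a b ab by (simp add: two_eq_0)
        then show ?thesis by (simp add: g_def)
      next
        case True
        then obtain c0 s1 where c0: "c0 \<in> Fk" and s1: "s1 \<in> A" "LL \<mu> s1 = x + c0"
          by (auto simp: P_def)
        have PM: "P c \<longleftrightarrow> c + c0 \<in> M" if c: "c \<in> Fk" for c
        proof
          assume "P c"
          then obtain s where s: "s \<in> A" "LL \<mu> s = x + c" by (auto simp: P_def)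
          have "s + s1 \<in> Fk" by (rule nk_A_diff[OF s(1) s1(1)])
          moreover have "LL \<mu> (s + s1) = c + c0"
          proof -
            have "LL \<mu> (s + s1) = (x + c) + (x + c0)" using s s1 by (simp only: LL_add)
            also have "\<dots> = c + c0" by (simp add: add.left_commute[of c x] add.assoc[symmetric] two_eq_0)
            finally show ?thesis .
          qed
          ultimately show "c + c0 \<in> M" unfolding M_def by (metis image_eqI)
        next
          assume "c + c0 \<in> M"
          then obtain t where t: "t \<in> Fk" "LL \<mu> t = c + c0" by (auto simp: M_def)
          have "nk (s1 + t) = 1" using s1 t by (simp add: nk_add nk_F A_def)
          moreover have "LL \<mu> (s1 + t) = x + c"
          proof -
            have "LL \<mu> (s1 + t) = (x + c0) + (c + c0)" using s1 t by (simp only: LL_add)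
            also have "\<dots> = x + c" by (simp add: add.left_commute[of c0 c c0] add.assoc two_eq_0)
            finally show ?thesis .
          qed
          ultimately show "P c" by (auto simp: P_def A_def)
        qed
        have par: "\<And>y y'. y \<in> Fk \<Longrightarrow> y' \<in> Fk \<Longrightarrow> (y + y' \<in> M) \<longleftrightarrow> ((y \<in> M) \<longleftrightarrow> (y' \<in> M))"
          unfolding M_def by (rule index2[OF \<mu>F True2])
        have v0: "g (x + 0) = (if c0 \<in> M then 0 else 1)" using gP[of 0] PM[of 0] by simp
        have va: "g (x + a) = (if (a \<in> M) = (c0 \<in> M) then 0 else 1)"
          using gP[OF a] PM[OF a] par[OF a c0] by simp
        have vb: "g (x + b) = (if (b \<in> M) = (c0 \<in> M) then 0 else 1)"
          using gP[OF b] PM[OF b] par[OF b c0] by simp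
        have vab: "g (x + (a + b)) = (if ((a \<in> M) = (b \<in> M)) = (c0 \<in> M) then 0 else 1)"
          using gP[OF ab] PM[OF ab] par[OF ab c0] par[OF a b] by simp
        have "D2 g a b x = 0" unfolding D v0 va vb vab
          by (cases "a \<in> M"; cases "b \<in> M"; cases "c0 \<in> M") (simp_all add: two_eq_0)
        then show ?thesis by (simp add: g_def)
      qed
    qed
  qed
qed

end

context c2fr begin

lemma F_unit: assumes "y \<in> Fk" "y \<noteq> 0" shows "y^(2^k-1) = 1"
proof -
  have "y * y^(2^k-1) = y^(Suc (2^k-1))" by (rule power_Suc[symmetric])
  also have "Suc (2^k-1) = 2^k" by simp
  finally have "y * y^(2^k-1) = y * 1" using assms by (simp add: inF)
  then show ?thesis using assms by simp
qed

lemma d_identity: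
  "(2^k - 1) * ((2^(r-1) - 1) * 2^(k - r) + 1) + 1
   = (2^k + 1) * ((2^(r-1) - 1) * 2^(k - r)) + (2::nat)^(k-r+1)"
proof -
  obtain A' where A: "(2::nat)^(k-r) = A' + 1" by (metis add.commute le_Suc_ex one_le_numeral one_le_power)
  obtain B' where B: "(2::nat)^(r-1) = B' + 1" by (metis add.commute le_Suc_ex one_le_numeral one_le_power)
  have "(2::nat)^k = 2^(k-r+1) * 2^(r-1)" using exp_k by simp
  also have "(2::nat)^(k-r+1) = 2 * 2^(k-r)" by simp
  finally have q: "(2::nat)^k = 2 * (A'+1) * (B'+1)" using A B by simp
  have C: "(2::nat)^k - 1 = 2*A'*B' + 2*A' + 2*B' + 1" using q by (simp add: algebra_simps)
  have C2: "(2::nat)^k + 1 = 2*A'*B' + 2*A' + 2*B' + 3" using q by (simp add: algebra_simps)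
  have E: "(2::nat)^(k-r+1) = 2 * (A' + 1)" using A by simp
  show ?thesis unfolding C C2 E A B by (simp add: algebra_simps)
qed

lemma delta_eq:
  assumes lam: "lam \<in> Fk" "lam \<noteq> 0"
    and d: "delta ^ ((2^k - 1) * ((2^(r-1) - 1) * 2^(k - r) + 1) + 1) = lam"
  shows "delta = lam"
proof -
  define m where "m = (2^(r-1) - 1) * 2^(k - r) + (1::nat)"
  define dd where "dd = (2^k - 1) * m + (1::nat)"
  have dl: "delta ^ dd = lam" using d by (simp add: dd_def m_def)
  have dn: "delta \<noteq> 0"
  proof
    assume "delta = 0" then have "lam = 0" using dl by (simp add: dd_def power_0_left)
    then show False using lam by simp
  qed
  define u where "u = delta ^ (2^k - 1)"
  have sq: "(2^k - 1) * (2^k + 1) = (2::nat)^(2*k) - 1"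
  proof -
    have "(2::nat)^(2*k) = 2^k * 2^k" by (simp add: power_add[symmetric] mult_2)
    moreover obtain Q where "(2::nat)^k = Q + 1" by (metis add.commute le_Suc_ex one_le_numeral one_le_power)
    ultimately show ?thesis by (simp add: algebra_simps)
  qed
  have uU: "u \<in> U"
  proof -
    have "u^(2^k+1) = delta^((2^k - 1) * (2^k + 1))" unfolding u_def by (rule power_mult[symmetric])
    also have "\<dots> = 1" unfolding sq using fermat1[OF dn] .
    finally show ?thesis by (simp add: U_def)
  qed
  have "u ^ dd = (delta ^ dd) ^ (2^k - 1)" by (simp add: u_def power_mult[symmetric] mult.commute)
  also have "\<dots> = 1" using dl F_unit[OF lam] by simp
  finally have ud: "u ^ dd = 1" .
  have "dd = (2^k + 1) * (m - 1) + 2^(k-r+1)" using d_identity by (simp add: dd_def m_def)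
  then have h2: "u ^ (2^(k-r+1)) = 1" using ud U_red[OF uU, of "m - 1" "2^(k-r+1)"] kpos by simp
  moreover have "coprime ((2::nat)^(k-r+1)) (2^k+1)" using kpos by simp
  moreover have uq: "u^(2^k+1) = 1" using uU unfolding U_def by blast
  ultimately have u1: "u = 1" by (intro pow_coprime_one[OF h2 uq]) simp_all
  have "delta ^ dd = (delta ^ (2^k-1)) ^ m * delta" unfolding dd_def power_add power_mult by simp
  then have "lam = (delta ^ (2^k-1)) ^ m * delta" using dl by simp
  then show ?thesis using u1 by (simp add: u_def)
qed

lemma Glam_scale: assumes lam: "lam \<in> Fk" "lam \<noteq> 0"
  shows "Glam k r lam x = Glam k r 1 (lam * x)"
  using Gh[OF lam, of x] by (simp add: Glam_def mult.commute)

lemma walsh_scale: assumes lam: "lam \<in> Fk" "lam \<noteq> 0"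
  shows "walsh n (Glam k r lam) a = walsh n (Glam k r 1) (inverse lam * a)"
  unfolding walsh_def
proof (rule sum.reindex_bij_witness[where i="\<lambda>y. inverse lam * y" and j="\<lambda>x. lam * x"])
  fix x :: 'a
  show "sgn_bit (Glam k r 1 (lam * x) + tr n (inverse lam * a * (lam * x))) = sgn_bit (Glam k r lam x + tr n (a * x))"
    using lam Glam_scale[OF lam, of x] by (simp add: field_simps)
qed (use lam in auto)

lemma dual_scale: assumes lam: "lam \<in> Fk" "lam \<noteq> 0"
  shows "dual n (Glam k r lam) x = dual n (Glam k r 1) (inverse lam * x)"
  by (simp add: dual_def walsh_scale[OF lam])

end

theorem proposition3:
  fixes k r n :: nat and lam delta :: "'a::{field,finite}"
  assumes "n = 2 * k" and "1 < r" and "r < k" and "coprime r k"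
    and "card (UNIV :: 'a set) = 2 ^ n"
    and "lam \<in> subfield_pow2 k" and "lam \<noteq> 0"
    and "delta ^ ((2^k - 1) * ((2^(r-1) - 1) * 2^(k - r) + 1) + 1) = lam"
  shows "(\<forall>x. dual n (Glam k r lam) x = dual n (Glam k r 1) (inverse delta * x))
       \<and> (\<forall>a\<in>subfield_pow2 k - {0}. \<forall>b\<in>subfield_pow2 k - {0}. \<forall>x.
            D2 (dual n (Glam k r lam)) a b x = 0)"
proof -
  interpret c2fr k "TYPE('a)" r
    by unfold_locales (use assms in auto)
  have dl: "delta = lam" using delta_eq assms(6,7,8) by blast
  have p1: "\<forall>x. dual n (Glam k r lam) x = dual n (Glam k r 1) (inverse delta * x)"
    using dual_scale[OF assms(6,7)] dl by simp
  have p2: "D2 (dual n (Glam k r lam)) a b x = 0" if a: "a \<in> subfield_pow2 k - {0}" and b: "b \<in> subfield_pow2 k - {0}" for a b x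
  proof -
    have "D2 (dual n (Glam k r lam)) a b x = D2 (dual n (Glam k r 1)) (inverse lam * a) (inverse lam * b) (inverse lam * x)"
      using p1 dl by (simp add: D2_def distrib_left)
    also have "\<dots> = 0" unfolding assms(1)
      by (rule D2_G1) (use a b assms(6) in \<open>auto intro: F_mult F_inverse\<close>)
    finally show ?thesis .
  qed
  show ?thesis using p1 p2 by blast
qed

end
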